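(* Let $\mathcal M$ be a convex tetrahedral mesh, and let $p_s$ be a point in the interior of a tetrahedron $t_s$ of $\mathcal M$, such that no edge of $\mathcal M$ has endpoints collinear with $p_s$ and no face of $\mathcal M$ has its three vertices coplanar with $p_s$. Then for every element $k$ (vertex, edge or face) of the skeleton of $\mathcal M$ there is exactly one tetrahedron $t$ of $\mathcal M$ having $k$ on its boundary such that $k$ is invisible from $p_s$ with respect to $t$.
   Context: The skeleton of $\mathcal M$ consists of its vertices, edges and faces. An element $k$ of a tetrahedron $t$ is invisible from $p_s$ with respect to $t$ if for some point $x$ of $k$ (in the relative interior of $k$ if $k$ is an edge or face) the segment from $p_s$ to $x$ intersects the interior of $t$. *)

theory Defs
  imports "HOL-Analysis.Analysis"
begin

type_synonym point = "real ^ 3"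

definition is_tetrahedron :: "point set \<Rightarrow> bool" where
  "is_tetrahedron t \<longleftrightarrow> card t = 4 \<and> \<not> affine_dependent t"

text \<open>A tetrahedral mesh: a finite set of tetrahedra meeting face-to-face
  (any two solid tetrahedra intersect exactly in the convex hull of their
  common vertices, i.e. in a common face, edge, vertex, or not at all).\<close>
definition tet_mesh :: "point set set \<Rightarrow> bool" where
  "tet_mesh M \<longleftrightarrow> finite M \<and> (\<forall>t\<in>M. is_tetrahedron t) \<and>
     (\<forall>t1\<in>M. \<forall>t2\<in>M. convex hull t1 \<inter> convex hull t2 = convex hull (t1 \<inter> t2))"

definition convex_tet_mesh :: "point set set \<Rightarrow> bool" where
  "convex_tet_mesh M \<longleftrightarrow> tet_mesh M \<and> convex (\<Union>t\<in>M. convex hull t)"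

text \<open>Elements of a tetrahedron: its vertices, edges and faces (as vertex sets).\<close>
definition elements_of :: "point set \<Rightarrow> point set set" where
  "elements_of t = {k. k \<subseteq> t \<and> 1 \<le> card k \<and> card k \<le> 3}"

definition skeleton :: "point set set \<Rightarrow> point set set" where
  "skeleton M = (\<Union>t\<in>M. elements_of t)"

definition edges_of_mesh :: "point set set \<Rightarrow> point set set" where
  "edges_of_mesh M = {k \<in> skeleton M. card k = 2}"

definition faces_of_mesh :: "point set set \<Rightarrow> point set set" where
  "faces_of_mesh M = {k \<in> skeleton M. card k = 3}"

text \<open>Element k of tetrahedron t is invisible from p w.r.t. t if for some point x
  of the relative interior of k (for a vertex: the vertex itself) the segment
  from p to x meets the interior of t.\<close>
definition invisible :: "point \<Rightarrow> point set \<Rightarrow> point set \<Rightarrow> bool" where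
  "invisible p k t \<longleftrightarrow>
     (\<exists>x\<in>rel_interior (convex hull k). closed_segment p x \<inter> interior (convex hull t) \<noteq> {})"

end

theory Submission
  imports Defs
begin

definition coord :: "point set \<Rightarrow> point \<Rightarrow> point \<Rightarrow> real" where
  "coord t p = (SOME u. sum u t = 1 \<and> (\<Sum>v\<in>t. u v *\<^sub>R v) = p)"

lemma tet_fin: "is_tetrahedron t \<Longrightarrow> finite t"
  unfolding is_tetrahedron_def by (metis card.infinite zero_neq_numeral)

lemma tet_ind: "is_tetrahedron t \<Longrightarrow> \<not> affine_dependent t"
  unfolding is_tetrahedron_def by simp

lemma coord_ok:
  assumes "is_tetrahedron t"
  shows "sum (coord t p) t = 1 \<and> (\<Sum>v\<in>t. coord t p v *\<^sub>R v) = p"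
proof -
  have c: "card t = 4" and ind: "\<not> affine_dependent t" using assms unfolding is_tetrahedron_def by auto
  have "of_nat (card t) = aff_dim t + 1" using aff_dim_affine_independent[OF ind] .
  then have "aff_dim t = 3" using c by simp
  then have "affine hull t = UNIV" using aff_dim_eq_full[of t] by simp
  then have "p \<in> affine hull t" by simp
  then have "\<exists>u. sum u t = 1 \<and> (\<Sum>v\<in>t. u v *\<^sub>R v) = p"
    using affine_hull_finite[OF tet_fin[OF assms]] by auto
  then show ?thesis unfolding coord_def by (rule someI_ex)
qed

lemma coord_unique:
  assumes "is_tetrahedron t" "sum u t = 1" "(\<Sum>v\<in>t. u v *\<^sub>R v) = p" "w \<in> t"
  shows "coord t p w = u w"
proof (rule ccontr)
  assume ne: "coord t p w \<noteq> u w"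
  have f: "finite t" using tet_fin[OF assms(1)] .
  let ?U = "\<lambda>v. u v - coord t p v"
  have "sum ?U t = 0" using coord_ok[OF assms(1), of p] assms(2) by (simp add: sum_subtractf)
  moreover have "(\<Sum>v\<in>t. ?U v *\<^sub>R v) = 0"
    using coord_ok[OF assms(1), of p] assms(3) by (simp add: scaleR_diff_left sum_subtractf)
  moreover have "\<exists>v\<in>t. ?U v \<noteq> 0" using ne assms(4) by (metis eq_iff_diff_eq_0)
  ultimately have "affine_dependent t" using affine_dependent_explicit_finite[OF f] by blast
  then show False using tet_ind[OF assms(1)] by simp
qed

lemma coord_affine:
  assumes "is_tetrahedron t" "w \<in> t"
  shows "coord t ((1-s) *\<^sub>R x + s *\<^sub>R p) w = (1-s) * coord t x w + s * coord t p w"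
proof -
  let ?u = "\<lambda>v. (1-s) * coord t x v + s * coord t p v"
  have "sum ?u t = 1"
    using coord_ok[OF assms(1), of x] coord_ok[OF assms(1), of p]
    by (simp add: sum.distrib sum_distrib_left[symmetric])
  moreover have "(\<Sum>v\<in>t. ?u v *\<^sub>R v) = (1-s) *\<^sub>R x + s *\<^sub>R p"
    using coord_ok[OF assms(1), of x] coord_ok[OF assms(1), of p]
    by (simp add: scaleR_add_left sum.distrib scaleR_sum_right[symmetric] flip: scaleR_scaleR)
  ultimately show ?thesis using coord_unique[OF assms(1) _ _ assms(2)] by blast
qed

lemma interior_coord:
  assumes "is_tetrahedron t"
  shows "y \<in> interior (convex hull t) \<longleftrightarrow> (\<forall>w\<in>t. coord t y w > 0)"
proof -
  have c: "card t = 4" using assms unfolding is_tetrahedron_def by auto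
  have I: "interior (convex hull t) = {y. \<exists>u. (\<forall>x \<in> t. 0 < u x) \<and> sum u t = 1 \<and> (\<Sum>x\<in>t. u x *\<^sub>R x) = y}"
    using interior_convex_hull_explicit_minimal[OF tet_ind[OF assms]] c by simp
  show ?thesis
  proof
    assume "y \<in> interior (convex hull t)"
    then obtain u where "\<forall>x \<in> t. 0 < u x" "sum u t = 1" "(\<Sum>x\<in>t. u x *\<^sub>R x) = y" using I by auto
    then show "\<forall>w\<in>t. coord t y w > 0" using coord_unique[OF assms] by auto
  next
    assume "\<forall>w\<in>t. coord t y w > 0"
    then show "y \<in> interior (convex hull t)" using I coord_ok[OF assms, of y] by auto
  qed
qed

lemma hull_coord:
  assumes "is_tetrahedron t"
  shows "y \<in> convex hull t \<longleftrightarrow> (\<forall>w\<in>t. coord t y w \<ge> 0)"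
proof -
  note I = convex_hull_finite[OF tet_fin[OF assms]]
  show ?thesis
  proof
    assume "y \<in> convex hull t"
    then obtain u where "\<forall>x \<in> t. 0 \<le> u x" "sum u t = 1" "(\<Sum>x\<in>t. u x *\<^sub>R x) = y" using I by auto
    then show "\<forall>w\<in>t. coord t y w \<ge> 0" using coord_unique[OF assms] by auto
  next
    assume "\<forall>w\<in>t. coord t y w \<ge> 0"
    then show "y \<in> convex hull t" using I coord_ok[OF assms, of y] by auto
  qed
qed

lemma coord_extend:
  assumes "is_tetrahedron t" "S \<subseteq> t" "sum u S = 1" "(\<Sum>v\<in>S. u v *\<^sub>R v) = x"
  shows "(\<forall>w\<in>S. coord t x w = u w) \<and> (\<forall>w\<in>t-S. coord t x w = 0)"
proof -
  have f: "finite t" using tet_fin[OF assms(1)] .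
  let ?u = "\<lambda>v. if v \<in> S then u v else 0"
  have "sum ?u t = sum ?u S"
    by (rule sum.mono_neutral_right[OF f assms(2)]) auto
  also have "\<dots> = 1" using assms(3) by simp
  finally have s1: "sum ?u t = 1" .
  have "(\<Sum>v\<in>t. ?u v *\<^sub>R v) = (\<Sum>v\<in>S. ?u v *\<^sub>R v)"
    by (rule sum.mono_neutral_right[OF f assms(2)]) auto
  also have "\<dots> = x" using assms(4) by simp
  finally have s2: "(\<Sum>v\<in>t. ?u v *\<^sub>R v) = x" .
  show ?thesis using coord_unique[OF assms(1) s1 s2] assms(2) by auto
qed

lemma ri_coord:
  assumes "is_tetrahedron t" "k \<subseteq> t" "x \<in> rel_interior (convex hull k)"
  shows "(\<forall>w\<in>k. coord t x w > 0) \<and> (\<forall>w\<in>t-k. coord t x w = 0)"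
proof -
  have "\<not> affine_dependent k" using tet_ind[OF assms(1)] assms(2) affine_dependent_subset by blast
  then obtain u where "\<forall>x \<in> k. 0 < u x" "sum u k = 1" "(\<Sum>x\<in>k. u x *\<^sub>R x) = x"
    using rel_interior_convex_hull_explicit assms(3) by blast
  then show ?thesis using coord_extend[OF assms(1,2)] by auto
qed

lemma hull_sub_coord:
  assumes "is_tetrahedron t" "S \<subseteq> t" "x \<in> convex hull S"
  shows "\<forall>w\<in>t-S. coord t x w = 0"
proof -
  have "finite S" using tet_fin[OF assms(1)] assms(2) finite_subset by blast
  then obtain u where "sum u S = 1" "(\<Sum>x\<in>S. u x *\<^sub>R x) = x"
    using convex_hull_finite assms(3) by blast
  then show ?thesis using coord_extend[OF assms(1,2)] by auto
qed

lemma vis_imp: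
  assumes "is_tetrahedron t" "k \<subseteq> t" "x \<in> rel_interior (convex hull k)"
    "closed_segment p x \<inter> interior (convex hull t) \<noteq> {}"
  shows "\<forall>w\<in>t-k. coord t p w > 0"
proof
  fix w assume w: "w \<in> t - k"
  obtain y where y: "y \<in> closed_segment p x" "y \<in> interior (convex hull t)" using assms(4) by auto
  then obtain u where u: "0 \<le> u" "u \<le> 1" "y = (1-u) *\<^sub>R p + u *\<^sub>R x"
    unfolding closed_segment_def by auto
  have "coord t y w > 0" using y(2) interior_coord[OF assms(1)] w by auto
  moreover have "coord t y w = (1-u) * coord t p w + u * coord t x w"
    using coord_affine[OF assms(1), of w u p x] w u(3) by simp
  moreover have "coord t x w = 0" using ri_coord[OF assms(1-3)] w by auto
  ultimately have "(1-u) * coord t p w > 0" by simp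
  then show "coord t p w > 0" using u(2) by (simp add: zero_less_mult_iff)
qed

lemma event:
  assumes "is_tetrahedron t" "k \<subseteq> t" "x \<in> rel_interior (convex hull k)"
    "\<forall>w\<in>t-k. coord t p w > 0"
  shows "\<forall>\<^sub>F s in at_right 0. (1-s) *\<^sub>R x + s *\<^sub>R p \<in> interior (convex hull t)"
proof -
  have ri: "(\<forall>w\<in>k. coord t x w > 0) \<and> (\<forall>w\<in>t-k. coord t x w = 0)" using ri_coord[OF assms(1-3)] .
  have "\<forall>w\<in>t. \<forall>\<^sub>F s in at_right 0. (1-s) * coord t x w + s * coord t p w > 0"
  proof
    fix w assume w: "w \<in> t"
    show "\<forall>\<^sub>F s in at_right 0. (1-s) * coord t x w + s * coord t p w > 0"
    proof (cases "w \<in> k")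
      case True
      have "((\<lambda>s. (1-s) * coord t x w + s * coord t p w) \<longlongrightarrow> (1-0) * coord t x w + 0 * coord t p w) (at_right 0)"
        by (intro tendsto_intros)
      then have "((\<lambda>s. (1-s) * coord t x w + s * coord t p w) \<longlongrightarrow> coord t x w) (at_right (0::real))" by simp
      moreover have "coord t x w > 0" using ri True by auto
      ultimately show ?thesis by (rule order_tendstoD(1))
    next
      case False
      have "coord t x w = 0" "coord t p w > 0" using ri assms(4) w False by auto
      show ?thesis
      proof (rule eventually_mono[OF eventually_at_right_less[of "0::real"]])
        fix s :: real assume "0 < s"
        then show "(1-s) * coord t x w + s * coord t p w > 0"
          using \<open>coord t x w = 0\<close> \<open>coord t p w > 0\<close> by simp
      qed
    qed
  qed
  then have "\<forall>\<^sub>F s in at_right 0. \<forall>w\<in>t. (1-s) * coord t x w + s * coord t p w > 0"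
    by (rule eventually_ball_finite[OF tet_fin[OF assms(1)]])
  then show ?thesis
  proof (rule eventually_mono)
    fix s :: real assume h: "\<forall>w\<in>t. (1-s) * coord t x w + s * coord t p w > 0"
    have "\<forall>w\<in>t. coord t ((1-s) *\<^sub>R x + s *\<^sub>R p) w > 0"
    proof
      fix w assume w: "w \<in> t"
      show "coord t ((1-s) *\<^sub>R x + s *\<^sub>R p) w > 0"
        unfolding coord_affine[OF assms(1) w] using h w by blast
    qed
    then show "(1-s) *\<^sub>R x + s *\<^sub>R p \<in> interior (convex hull t)"
      using interior_coord[OF assms(1)] by blast
  qed
qed

lemma get_s:
  assumes "\<forall>\<^sub>F s in at_right (0::real). P s"
  shows "\<exists>s. 0 < s \<and> s < 1 \<and> P s"
proof -
  have "\<forall>\<^sub>F s in at_right (0::real). P s \<and> s \<in> {0<..<1}"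
    using assms eventually_at_right_real[of 0 1] by (simp add: eventually_conj)
  then obtain b where "b > 0" "\<forall>y>0. y < b \<longrightarrow> P y \<and> y \<in> {0<..<1}"
    unfolding eventually_at_right_field by auto
  then have "P (min (b/2) (1/2)) \<and> min (b/2) (1/2) \<in> {0<..<1}" by simp
  then show ?thesis by (metis greaterThanLessThan_iff)
qed

lemma seg_mem: "0 \<le> s \<Longrightarrow> s \<le> 1 \<Longrightarrow> (1-s) *\<^sub>R x + s *\<^sub>R p \<in> closed_segment p x"
  unfolding closed_segment_def by (rule CollectI, rule exI[of _ "1-s"]) (auto simp: add.commute)

lemma coord_nz:
  assumes M: "convex_tet_mesh M" and t: "t \<in> M" and w: "w \<in> t"
    and cop: "\<forall>f\<in>faces_of_mesh M. \<not> coplanar (insert ps f)"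
  shows "coord t ps w \<noteq> 0"
proof
  assume z: "coord t ps w = 0"
  have tet: "is_tetrahedron t" using M t unfolding convex_tet_mesh_def tet_mesh_def by auto
  have f: "finite t" using tet_fin[OF tet] .
  let ?F = "t - {w}"
  have cF: "card ?F = 3" using tet w unfolding is_tetrahedron_def by simp
  have "?F \<in> elements_of t" unfolding elements_of_def using cF by simp
  then have "?F \<in> skeleton M" unfolding skeleton_def using t by blast
  then have "?F \<in> faces_of_mesh M" unfolding faces_of_mesh_def using cF by blast
  have s1: "sum (coord t ps) ?F = 1"
    using coord_ok[OF tet, of ps] sum.remove[OF f w, of "coord t ps"] z by simp
  have "(\<Sum>v\<in>t. coord t ps v *\<^sub>R v) = coord t ps w *\<^sub>R w + (\<Sum>v\<in>?F. coord t ps v *\<^sub>R v)"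
    by (rule sum.remove[OF f w])
  then have s2: "(\<Sum>v\<in>?F. coord t ps v *\<^sub>R v) = ps"
    using coord_ok[OF tet, of ps] z by (simp only: scale_zero_left add_0)
  from s1 s2 have "ps \<in> {y. \<exists>u. sum u ?F = 1 \<and> (\<Sum>v\<in>?F. u v *\<^sub>R v) = y}" by blast
  moreover have eq: "affine hull ?F = {y. \<exists>u. sum u ?F = 1 \<and> (\<Sum>v\<in>?F. u v *\<^sub>R v) = y}"
    by (rule affine_hull_finite) (simp add: f)
  ultimately have "ps \<in> affine hull ?F" by (simp only: eq)
  then have sub: "insert ps ?F \<subseteq> affine hull ?F" using hull_subset[of ?F affine] by (simp only: insert_subset)
  obtain a b c where abc: "?F = {a,b,c}" using cF unfolding card_3_iff by blast
  have "coplanar (insert ps ?F)" unfolding coplanar_def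
    by (rule exI[of _ a], rule exI[of _ b], rule exI[of _ c]) (use sub abc in simp)
  then show False using cop \<open>?F \<in> faces_of_mesh M\<close> by blast
qed

theorem mainTheorem9:
  fixes M :: "point set set" and ts :: "point set" and ps :: point
  assumes "convex_tet_mesh M"
    and "ts \<in> M"
    and "ps \<in> interior (convex hull ts)"
    and "\<forall>e\<in>edges_of_mesh M. \<not> collinear (insert ps e)"
    and "\<forall>f\<in>faces_of_mesh M. \<not> coplanar (insert ps f)"
  shows "\<forall>k\<in>skeleton M. \<exists>!t. t \<in> M \<and> k \<in> elements_of t \<and> invisible ps k t"
proof
  fix k assume "k \<in> skeleton M"
  then obtain t0 where t0: "t0 \<in> M" "k \<in> elements_of t0" unfolding skeleton_def by auto
  have tets: "\<And>t. t \<in> M \<Longrightarrow> is_tetrahedron t" using assms(1) unfolding convex_tet_mesh_def tet_mesh_def by auto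
  have finM: "finite M" using assms(1) unfolding convex_tet_mesh_def tet_mesh_def by auto
  have inter: "\<And>t1 t2. t1 \<in> M \<Longrightarrow> t2 \<in> M \<Longrightarrow> convex hull t1 \<inter> convex hull t2 = convex hull (t1 \<inter> t2)"
    using assms(1) unfolding convex_tet_mesh_def tet_mesh_def by auto
  have k0: "k \<subseteq> t0" "k \<noteq> {}" using t0(2) unfolding elements_of_def by auto
  obtain x where x: "x \<in> rel_interior (convex hull k)"
    using rel_interior_eq_empty[of "convex hull k"] k0(2) by auto
  have char: "\<And>t. t \<in> M \<Longrightarrow> k \<subseteq> t \<Longrightarrow> invisible ps k t \<longleftrightarrow> (\<forall>w\<in>t-k. coord t ps w > 0)"
  proof
    fix t assume t: "t \<in> M" "k \<subseteq> t"
    {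
      assume "invisible ps k t"
      then obtain x' where "x' \<in> rel_interior (convex hull k)"
        "closed_segment ps x' \<inter> interior (convex hull t) \<noteq> {}"
        unfolding invisible_def by auto
      then show "\<forall>w\<in>t-k. coord t ps w > 0" using vis_imp[OF tets[OF t(1)] t(2)] by blast
    }
    {
      assume "\<forall>w\<in>t-k. coord t ps w > 0"
      from get_s[OF event[OF tets[OF t(1)] t(2) x this]] obtain s where
        "0 < s" "s < 1" "(1-s) *\<^sub>R x + s *\<^sub>R ps \<in> interior (convex hull t)" by auto
      then show "invisible ps k t" unfolding invisible_def using x seg_mem[of s x ps] by auto
    }
  qed
  show "\<exists>!t. t \<in> M \<and> k \<in> elements_of t \<and> invisible ps k t"
  proof (rule ex_ex1I)
    let ?B = "\<Union> ((\<lambda>t. convex hull t) ` {t\<in>M. x \<notin> convex hull t})"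
    have "closed ?B"
    proof (rule closed_Union)
      show "finite ((\<lambda>t. convex hull t) ` {t\<in>M. x \<notin> convex hull t})" using finM by simp
      show "\<forall>S\<in>(\<lambda>t. convex hull t) ` {t\<in>M. x \<notin> convex hull t}. closed S"
      proof
        fix S assume "S \<in> (\<lambda>t. convex hull t) ` {t\<in>M. x \<notin> convex hull t}"
        then obtain t where "t \<in> M" "S = convex hull t" by blast
        then show "closed S"
          using compact_imp_closed[OF finite_imp_compact_convex_hull[OF tet_fin[OF tets]]] by blast
      qed
    qed
    then have "open (- ?B)" by (rule open_Compl)
    moreover have "x \<in> - ?B" by auto
    ultimately have "\<exists>e>0. ball x e \<subseteq> - ?B" unfolding open_contains_ball by blast
    then obtain e where e: "e > 0" "ball x e \<subseteq> - ?B" by blast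
    have "((\<lambda>s. (1-s) *\<^sub>R x + s *\<^sub>R ps) \<longlongrightarrow> (1-0) *\<^sub>R x + 0 *\<^sub>R ps) (at_right (0::real))"
      by (intro tendsto_intros)
    then have "((\<lambda>s. (1-s) *\<^sub>R x + s *\<^sub>R ps) \<longlongrightarrow> x) (at_right (0::real))" by simp
    from get_s[OF tendstoD[OF this e(1)]] obtain s where s: "0 < s" "s < 1"
      "dist ((1-s) *\<^sub>R x + s *\<^sub>R ps) x < e" by blast
    define y where "y = (1-s) *\<^sub>R x + s *\<^sub>R ps"
    have yB: "y \<notin> ?B" using e(2) s(3) unfolding y_def by (auto simp: dist_commute)
    let ?U = "\<Union>t\<in>M. convex hull t"
    have "convex ?U" using assms(1) unfolding convex_tet_mesh_def by auto
    moreover have "x \<in> ?U"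
      using t0(1) x rel_interior_subset hull_mono[OF k0(1)] by blast
    moreover have "ps \<in> ?U" using assms(2,3) interior_subset by blast
    ultimately have "y \<in> ?U" unfolding y_def using s by (intro convexD) auto
    then obtain t1 where t1: "t1 \<in> M" "y \<in> convex hull t1" by auto
    have xt1: "x \<in> convex hull t1" using yB t1 by blast
    have "x \<in> convex hull (t1 \<inter> t0)"
      using inter[OF t1(1) t0(1)] xt1 x rel_interior_subset hull_mono[OF k0(1)] by blast
    then have "\<forall>w\<in>t0-(t1\<inter>t0). coord t0 x w = 0" using hull_sub_coord[OF tets[OF t0(1)]] by blast
    moreover have "\<forall>w\<in>k. coord t0 x w > 0" using ri_coord[OF tets[OF t0(1)] k0(1) x] by blast
    ultimately have kt1: "k \<subseteq> t1"
    proof (intro subsetI)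
      fix w assume h0: "\<forall>w\<in>t0-(t1\<inter>t0). coord t0 x w = 0" and h1: "\<forall>w\<in>k. coord t0 x w > 0" and wk: "w \<in> k"
      show "w \<in> t1"
      proof (rule ccontr)
        assume "w \<notin> t1"
        then have "w \<in> t0-(t1\<inter>t0)" using wk k0(1) by blast
        then have "coord t0 x w = 0" using h0 by blast
        moreover have "coord t0 x w > 0" using h1 wk by blast
        ultimately show False by simp
      qed
    qed
    have "\<forall>w\<in>t1-k. coord t1 ps w > 0"
    proof
      fix w assume w: "w \<in> t1 - k"
      have "coord t1 y w \<ge> 0" using t1(2) hull_coord[OF tets[OF t1(1)]] w by auto
      moreover have "coord t1 y w = (1-s) * coord t1 x w + s * coord t1 ps w"
        unfolding y_def using coord_affine[OF tets[OF t1(1)]] w by auto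
      moreover have "coord t1 x w = 0" using ri_coord[OF tets[OF t1(1)] kt1 x] w by auto
      ultimately have "s * coord t1 ps w \<ge> 0" by simp
      then have "coord t1 ps w \<ge> 0" using s(1) by (simp add: zero_le_mult_iff)
      moreover have "coord t1 ps w \<noteq> 0" using coord_nz[OF assms(1) t1(1) _ assms(5)] w by auto
      ultimately show "coord t1 ps w > 0" by simp
    qed
    then have "invisible ps k t1" using char[OF t1(1) kt1] by simp
    moreover have "k \<in> elements_of t1" using kt1 t0(2) unfolding elements_of_def by auto
    ultimately show "\<exists>t. t \<in> M \<and> k \<in> elements_of t \<and> invisible ps k t" using t1(1) by blast
  next
    fix t1 t2
    assume a1: "t1 \<in> M \<and> k \<in> elements_of t1 \<and> invisible ps k t1"
      and a2: "t2 \<in> M \<and> k \<in> elements_of t2 \<and> invisible ps k t2"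
    have k1: "k \<subseteq> t1" and k2: "k \<subseteq> t2" using a1 a2 unfolding elements_of_def by auto
    have e1: "\<forall>\<^sub>F s in at_right 0. (1-s) *\<^sub>R x + s *\<^sub>R ps \<in> interior (convex hull t1)"
      using event[OF tets k1 x] char[OF _ k1] a1 by blast
    have e2: "\<forall>\<^sub>F s in at_right 0. (1-s) *\<^sub>R x + s *\<^sub>R ps \<in> interior (convex hull t2)"
      using event[OF tets k2 x] char[OF _ k2] a2 by blast
    obtain s where "(1-s) *\<^sub>R x + s *\<^sub>R ps \<in> interior (convex hull t1) \<inter> interior (convex hull t2)"
      using get_s[OF eventually_conj[OF e1 e2]] by auto
    then have ne: "interior (convex hull (t1 \<inter> t2)) \<noteq> {}"
      using inter[of t1 t2] a1 a2 interior_Int by (metis empty_iff)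
    show "t1 = t2"
    proof (rule ccontr)
      assume "t1 \<noteq> t2"
      have c1: "card t1 = 4" and c2: "card t2 = 4" using tets a1 a2 unfolding is_tetrahedron_def by auto
      have f1: "finite t1" using tet_fin tets a1 by blast
      have "t1 \<inter> t2 \<noteq> t1 \<or> t1 \<inter> t2 \<noteq> t2" using \<open>t1 \<noteq> t2\<close> by blast
      then have "card (t1 \<inter> t2) < 4"
        using c1 c2 f1 tet_fin tets a2
        by (metis Int_lower1 Int_lower2 card_subset_eq le_neq_implies_less card_mono)
      then have "interior (convex hull (t1 \<inter> t2)) = {}"
        using f1 by (intro empty_interior_convex_hull) auto
      then show False using ne by simp
    qed
  qed
qed

end
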